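(* Consider the distributed detection model described in the context, with fixed $N\ge 1$, priors $P_0,P_1\in(0,1)$, and local operating point $0<P_f<P_d<1$. Say that the fusion center is blind for a triple $(\alpha,P_{1,0},P_{0,1})\in[0,1]^3$ if $P(H_i\mid \mathbf u)=P(H_i)$ for $i=0,1$ and every $\mathbf u\in\{0,1\}^N$ (equivalently $P(\mathbf u\mid H_0)=P(\mathbf u\mid H_1)$ for all $\mathbf u$). Then the smallest fraction $\alpha\in[0,1]$ for which there exist Byzantine flipping probabilities $(P_{1,0},P_{0,1})\in[0,1]^2$ making the fusion center blind is $\alpha_{blind}=1/2$.
   Context: Binary hypothesis test between $H_0$ (signal absent) and $H_1$ (signal present) with prior probabilities $P_0=P(H_0)$, $P_1=P(H_1)$, $P_0+P_1=1$. There are $N$ sensors; each sensor $i$ makes a local binary decision $v_i\in\{0,1\}$, and, conditionally on the hypothesis, the $v_i$ are i.i.d. with $P(v_i=1\mid H_1)=P_d$, $P(v_i=1\mid H_0)=P_f$. Each sensor, independently, is a Byzantine with probability $\alpha\in[0,1]$ (and honest otherwise). An honest node sends $u_i=v_i$ to the fusion center. A Byzantine node sends $u_i=1$ with probability $P_{1,0}$ when $v_i=0$ and sends $u_i=0$ with probability $P_{0,1}$ when $v_i=1$ (so it sends $u_i=1$ with probability $1-P_{0,1}$ when $v_i=1$). Consequently, conditionally on $H_j$, the $u_i$ are i.i.d. Bernoulli with $P(u_i=1\mid H_0)=\pi_{1,0}=\alpha(P_{1,0}(1-P_f)+(1-P_{0,1})P_f)+(1-\alpha)P_f$ and $P(u_i=1\mid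 H_1)=\pi_{1,1}=\alpha(P_{1,0}(1-P_d)+(1-P_{0,1})P_d)+(1-\alpha)P_d$. The fusion center observes $\mathbf u=(u_1,\dots,u_N)$. *)

theory Defs
  imports Complex_Main
begin

text \<open>Probability that a sensor reports u_i = 1 under H0 (pi_{1,0}) and under H1 (pi_{1,1}).\<close>
definition pi10 :: "real \<Rightarrow> real \<Rightarrow> real \<Rightarrow> real \<Rightarrow> real" where
  "pi10 Pf \<alpha> P10 P01 = \<alpha> * (P10 * (1 - Pf) + (1 - P01) * Pf) + (1 - \<alpha>) * Pf"

definition pi11 :: "real \<Rightarrow> real \<Rightarrow> real \<Rightarrow> real \<Rightarrow> real" where
  "pi11 Pd \<alpha> P10 P01 = \<alpha> * (P10 * (1 - Pd) + (1 - P01) * Pd) + (1 - \<alpha>) * Pd"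

text \<open>Likelihood of the report vector u (a list of N bits, True = 1) when the
  u_i are i.i.d. Bernoulli(p).\<close>
definition lik :: "real \<Rightarrow> bool list \<Rightarrow> real" where
  "lik p u = (\<Prod>b\<leftarrow>u. if b then p else 1 - p)"

definition marg :: "real \<Rightarrow> real \<Rightarrow> real \<Rightarrow> real \<Rightarrow> bool list \<Rightarrow> real" where
  "marg P0 P1 q0 q1 u = P0 * lik q0 u + P1 * lik q1 u"

definition post0 :: "real \<Rightarrow> real \<Rightarrow> real \<Rightarrow> real \<Rightarrow> bool list \<Rightarrow> real" where
  "post0 P0 P1 q0 q1 u = P0 * lik q0 u / marg P0 P1 q0 q1 u"

definition post1 :: "real \<Rightarrow> real \<Rightarrow> real \<Rightarrow> real \<Rightarrow> bool list \<Rightarrow> real" where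
  "post1 P0 P1 q0 q1 u = P1 * lik q1 u / marg P0 P1 q0 q1 u"

text \<open>The fusion center is blind for (alpha, P10, P01): for every observable
  u in {0,1}^N (i.e. with positive probability, so that the conditional
  probability is defined) the posteriors equal the priors.\<close>
definition blind :: "nat \<Rightarrow> real \<Rightarrow> real \<Rightarrow> real \<Rightarrow> real \<Rightarrow> real \<Rightarrow> real \<Rightarrow> real \<Rightarrow> bool" where
  "blind N P0 P1 Pf Pd \<alpha> P10 P01 \<longleftrightarrow>
     (\<forall>u. length u = N \<longrightarrow> marg P0 P1 (pi10 Pf \<alpha> P10 P01) (pi11 Pd \<alpha> P10 P01) u > 0 \<longrightarrow>
        post0 P0 P1 (pi10 Pf \<alpha> P10 P01) (pi11 Pd \<alpha> P10 P01) u = P0 \<and>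
        post1 P0 P1 (pi10 Pf \<alpha> P10 P01) (pi11 Pd \<alpha> P10 P01) u = P1)"

end

theory Submission
  imports Defs
begin

lemma lik_rep: "lik p (replicate N True) = p ^ N"
  by (induction N) (auto simp: lik_def)

theorem lemma1:
  fixes N :: nat and P0 P1 Pf Pd :: real
  assumes "N \<ge> 1"
    and "0 < P0" and "P0 < 1" and "0 < P1" and "P1 < 1" and "P0 + P1 = 1"
    and "0 < Pf" and "Pf < Pd" and "Pd < 1"
  shows "(1/2::real) \<in> {\<alpha> \<in> {0..1}. \<exists>P10 \<in> {0..1}. \<exists>P01 \<in> {0..1}.
                    blind N P0 P1 Pf Pd \<alpha> P10 P01}
         \<and> (\<forall>\<alpha> \<in> {0..1}. (\<exists>P10 \<in> {0..1}. \<exists>P01 \<in> {0..1}.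
                    blind N P0 P1 Pf Pd \<alpha> P10 P01) \<longrightarrow> 1/2 \<le> \<alpha>)"
proof
  have e0: "pi10 Pf (1/2) 1 1 = 1/2" and e1: "pi11 Pd (1/2) 1 1 = 1/2"
    by (simp_all add: pi10_def pi11_def field_simps)
  have "blind N P0 P1 Pf Pd (1/2) 1 1"
    unfolding blind_def e0 e1
  proof (intro allI impI)
    fix u :: "bool list"
    assume "0 < marg P0 P1 (1/2) (1/2) u"
    have m: "marg P0 P1 (1/2) (1/2) u = lik (1/2) u"
      using assms(6) by (simp add: marg_def distrib_right[symmetric])
    hence "lik (1/2) u \<noteq> 0" using \<open>0 < marg P0 P1 (1/2) (1/2) u\<close> by simp
    thus "post0 P0 P1 (1/2) (1/2) u = P0 \<and> post1 P0 P1 (1/2) (1/2) u = P1"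
      using m by (simp add: post0_def post1_def)
  qed
  thus "(1/2::real) \<in> {\<alpha> \<in> {0..1}. \<exists>P10 \<in> {0..1}. \<exists>P01 \<in> {0..1}.
                    blind N P0 P1 Pf Pd \<alpha> P10 P01}" by force
next
  show "\<forall>\<alpha> \<in> {0..1}. (\<exists>P10 \<in> {0..1}. \<exists>P01 \<in> {0..1}.
                    blind N P0 P1 Pf Pd \<alpha> P10 P01) \<longrightarrow> 1/2 \<le> \<alpha>"
  proof (intro ballI impI)
    fix \<alpha> :: real assume a: "\<alpha> \<in> {0..1}"
    assume "\<exists>P10 \<in> {0..1}. \<exists>P01 \<in> {0..1}. blind N P0 P1 Pf Pd \<alpha> P10 P01"
    then obtain P10 P01 where p: "P10 \<in> {0..1}" "P01 \<in> {0..1}"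
      and b: "blind N P0 P1 Pf Pd \<alpha> P10 P01" by blast
    show "1/2 \<le> \<alpha>"
    proof (rule ccontr)
      assume "\<not> 1/2 \<le> \<alpha>"
      hence lt: "\<alpha> < 1/2" by simp
      define q0 where "q0 = pi10 Pf \<alpha> P10 P01"
      define q1 where "q1 = pi11 Pd \<alpha> P10 P01"
      have q0nn: "0 \<le> q0" unfolding q0_def pi10_def
        using a p assms by (intro add_nonneg_nonneg mult_nonneg_nonneg) auto
      have diff: "q1 - q0 = (Pd - Pf) * (1 - \<alpha> * (P10 + P01))"
        unfolding q0_def q1_def pi10_def pi11_def by (simp add: algebra_simps)
      have "\<alpha> * (P10 + P01) \<le> \<alpha> * 2" using a p by (intro mult_left_mono) auto
      hence "0 < 1 - \<alpha> * (P10 + P01)" using lt by linarith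
      hence "0 < q1 - q0" unfolding diff using assms by simp
      hence lt01: "q0 < q1" by simp
      let ?u = "replicate N True"
      have pw: "q0 ^ N < q1 ^ N" using lt01 q0nn assms(1) by (intro power_strict_mono) auto
      have "0 < q1 ^ N" using lt01 q0nn by simp
      hence "0 < marg P0 P1 q0 q1 ?u" unfolding marg_def lik_rep
        using assms q0nn by (intro add_nonneg_pos) auto
      with b have "post0 P0 P1 q0 q1 ?u = P0" unfolding blind_def q0_def q1_def by auto
      then have "P0 * q0 ^ N = P0 * (P0 * q0 ^ N + P1 * q1 ^ N)"
        using \<open>0 < marg P0 P1 q0 q1 ?u\<close>
        unfolding post0_def marg_def lik_rep by (simp add: divide_eq_eq)
      hence "q0 ^ N = P0 * q0 ^ N + P1 * q1 ^ N" using assms by simp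
      moreover have "P0 = 1 - P1" using assms(6) by simp
      ultimately have "P1 * q0 ^ N = P1 * q1 ^ N" by (simp add: algebra_simps)
      hence "q0 ^ N = q1 ^ N" using assms by simp
      with pw show False by simp
    qed
  qed
qed

end
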